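(* Let $M$ be a DFA with $n$ states. Then ${\rm fact}(L(M))$ can be accepted by a DFA with at most $2^{n-1}$ states, and this bound is tight: for every $n\ge1$ there exists a DFA $M$ with $n$ states such that the minimal DFA accepting ${\rm fact}(L(M))$ has exactly $2^{n-1}$ states.
   Context: DFAs are complete (one initial state, a total transition function $Q\times\Sigma\to Q$); the minimal DFA of a regular language is the complete DFA with fewest states accepting it. ${\rm fact}(L)$ is the set of all factors (contiguous subwords) of words in $L$. *)

theory Defs
  imports Main
begin

definition dfa :: "'a set \<Rightarrow> 's set \<Rightarrow> 's \<Rightarrow> ('s \<Rightarrow> 'a \<Rightarrow> 's) \<Rightarrow> 's set \<Rightarrow> bool" where
  "dfa Sig Q q0 delta F \<longleftrightarrow> finite Sig \<and> finite Q \<and> q0 \<in> Q \<and>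
     (\<forall>q\<in>Q. \<forall>a\<in>Sig. delta q a \<in> Q) \<and> F \<subseteq> Q"

definition delta_star :: "('s \<Rightarrow> 'a \<Rightarrow> 's) \<Rightarrow> 's \<Rightarrow> 'a list \<Rightarrow> 's" where
  "delta_star delta q w = foldl delta q w"

definition lang :: "'a set \<Rightarrow> 's \<Rightarrow> ('s \<Rightarrow> 'a \<Rightarrow> 's) \<Rightarrow> 's set \<Rightarrow> 'a list set" where
  "lang Sig q0 delta F = {w. set w \<subseteq> Sig \<and> delta_star delta q0 w \<in> F}"

definition fact :: "'a list set \<Rightarrow> 'a list set" where
  "fact L = {v. \<exists>u w. u @ v @ w \<in> L}"

text \<open>Number of states of the minimal complete DFA over Sig accepting L
  (state sets represented as sets of naturals, w.l.o.g.).\<close>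
definition min_dfa_states :: "'a set \<Rightarrow> 'a list set \<Rightarrow> nat" where
  "min_dfa_states Sig L = (LEAST k. \<exists>(Q::nat set) q0 delta F.
      dfa Sig Q q0 delta F \<and> lang Sig q0 delta F = L \<and> card Q = k)"

end

theory Submission
  imports Defs
begin

lemma ds_Nil[simp]: "delta_star d q [] = q"
  by (simp add: delta_star_def)
lemma ds_Cons[simp]: "delta_star d q (a#w) = delta_star d (d q a) w"
  by (simp add: delta_star_def)
lemma ds_append[simp]: "delta_star d q (u@v) = delta_star d (delta_star d q u) v"
  by (simp add: delta_star_def)

lemma ds_closed:
  assumes "\<forall>q\<in>Q. \<forall>a\<in>Sig. d q a \<in> Q" "q \<in> Q" "set w \<subseteq> Sig"
  shows "delta_star d q w \<in> Q"
  using assms(2,3) by (induction w arbitrary: q) (use assms(1) in auto)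

lemma dfa_to_nat:
  assumes "dfa Sig (Q::'b set) q0 d F"
  shows "\<exists>(Q'::nat set) q0' d' F'. dfa Sig Q' q0' d' F' \<and>
     lang Sig q0' d' F' = lang Sig q0 d F \<and> card Q' = card Q"
proof -
  from assms have fin: "finite Q" and cl: "\<forall>q\<in>Q. \<forall>a\<in>Sig. d q a \<in> Q"
    and q0: "q0 \<in> Q" and FQ: "F \<subseteq> Q" and fS: "finite Sig" by (auto simp: dfa_def)
  obtain g :: "'b \<Rightarrow> nat" and n where g: "g ` Q = {i. i < n}" "inj_on g Q"
    using finite_imp_inj_to_nat_seg[OF fin] by blast
  define d' where "d' = (\<lambda>s a. g (d (inv_into Q g s) a))"
  have key: "delta_star d' (g q) w = g (delta_star d q w)" if "q \<in> Q" "set w \<subseteq> Sig" for q w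
    using that
  proof (induction w arbitrary: q)
    case Nil then show ?case by simp
  next
    case (Cons a w)
    have "d' (g q) a = g (d q a)" using Cons.prems g(2) by (simp add: d'_def)
    then show ?case using Cons cl by simp
  qed
  have "dfa Sig (g`Q) (g q0) d' (g`F)"
    unfolding dfa_def using fS fin q0 FQ cl g(2)
    by (auto simp: d'_def)
  moreover have "lang Sig (g q0) d' (g`F) = lang Sig q0 d F"
  proof -
    { fix w assume w: "set w \<subseteq> Sig"
      have x: "delta_star d q0 w \<in> Q" using ds_closed[OF cl q0 w] .
      have "g (delta_star d q0 w) \<in> g ` F \<longleftrightarrow> delta_star d q0 w \<in> F"
        using inj_on_image_mem_iff[OF g(2) x FQ] .
      hence "delta_star d' (g q0) w \<in> g ` F \<longleftrightarrow> delta_star d q0 w \<in> F"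
        using key[OF q0 w] by simp }
    then show ?thesis unfolding lang_def by auto
  qed
  moreover have "card (g`Q) = card Q" using card_image[OF g(2)] .
  ultimately show ?thesis by blast
qed

lemma upper:
  assumes "dfa Sig (Q::'s set) q0 d F"
  shows "\<exists>(Q'::nat set) q0' d' F'. dfa Sig Q' q0' d' F' \<and>
               lang Sig q0' d' F' = fact (lang Sig q0 d F) \<and>
               card Q' \<le> 2 ^ (card Q - 1)"
proof -
  from assms have fin: "finite Q" and cl: "\<forall>q\<in>Q. \<forall>a\<in>Sig. d q a \<in> Q"
    and q0: "q0 \<in> Q" and FQ: "F \<subseteq> Q" and fS: "finite Sig" by (auto simp: dfa_def)
  define C where "C = {q \<in> Q. \<exists>w. set w \<subseteq> Sig \<and> delta_star d q w \<in> F}"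
  show ?thesis
  proof (cases "C = Q")
    case True
    have "fact (lang Sig q0 d F) = {w. set w \<subseteq> Sig}"
    proof
      show "fact (lang Sig q0 d F) \<subseteq> {w. set w \<subseteq> Sig}"
        by (auto simp: fact_def lang_def)
      show "{w. set w \<subseteq> Sig} \<subseteq> fact (lang Sig q0 d F)"
      proof
        fix v assume "v \<in> {w. set w \<subseteq> Sig}"
        hence v: "set v \<subseteq> Sig" by simp
        have "delta_star d q0 v \<in> C" using ds_closed[OF cl q0 v] True by simp
        then obtain w where "set w \<subseteq> Sig" "delta_star d (delta_star d q0 v) w \<in> F"
          unfolding C_def by blast
        hence "[] @ v @ w \<in> lang Sig q0 d F" using v by (simp add: lang_def)
        thus "v \<in> fact (lang Sig q0 d F)" unfolding fact_def by blast
      qed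
    qed
    moreover have "dfa Sig {0::nat} 0 (\<lambda>_ _. 0) {0}" using fS by (simp add: dfa_def)
    moreover have "lang Sig (0::nat) (\<lambda>_ _. 0) {0} = {w. set w \<subseteq> Sig}"
    proof -
      have "delta_star (\<lambda>_ _. 0::nat) 0 w = 0" for w :: "'a list"
        by (induction w) auto
      thus ?thesis by (simp add: lang_def)
    qed
    moreover have "card {0::nat} \<le> 2 ^ (card Q - 1)" by simp
    ultimately show ?thesis by blast
  next
    case False
    have CQ: "C \<subseteq> Q" by (auto simp: C_def)
    hence CQs: "C \<subset> Q" using False by blast
    have finC: "finite C" using CQ fin finite_subset by blast
    have cardC: "card C \<le> card Q - 1"
      using psubset_card_mono[OF fin CQs] by simp
    define R where "R = {delta_star d q0 u | u. set u \<subseteq> Sig}"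
    define ds where "ds = (\<lambda>S a. (\<lambda>q. d q a) ` S \<inter> C)"
    have dfa2: "dfa Sig (Pow C) (R \<inter> C) ds (Pow C - {{}})"
      using fS finC by (auto simp: dfa_def ds_def)
    have key: "delta_star ds S w = (\<lambda>q. delta_star d q w) ` S \<inter> C"
      if "S \<subseteq> C" "set w \<subseteq> Sig" for S w
      using that
    proof (induction w arbitrary: S)
      case Nil then show ?case by auto
    next
      case (Cons a w)
      have aS: "a \<in> Sig" and wS: "set w \<subseteq> Sig" using Cons.prems by auto
      have "delta_star ds S (a#w) = delta_star ds (ds S a) w" by simp
      also have "\<dots> = (\<lambda>q. delta_star d q w) ` ds S a \<inter> C"
        using Cons.IH[OF _ wS] by (simp add: ds_def)
      also have "\<dots> = (\<lambda>q. delta_star d q (a#w)) ` S \<inter> C"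
      proof
        show "(\<lambda>q. delta_star d q w) ` ds S a \<inter> C \<subseteq> (\<lambda>q. delta_star d q (a#w)) ` S \<inter> C"
          by (auto simp: ds_def)
        show "(\<lambda>q. delta_star d q (a#w)) ` S \<inter> C \<subseteq> (\<lambda>q. delta_star d q w) ` ds S a \<inter> C"
        proof
          fix x assume "x \<in> (\<lambda>q. delta_star d q (a#w)) ` S \<inter> C"
          then obtain q where q: "q \<in> S" "x = delta_star d (d q a) w" "x \<in> C" by auto
          have qa: "d q a \<in> Q" using q(1) Cons.prems(1) CQ cl aS by blast
          from q(3) obtain w' where "set w' \<subseteq> Sig" "delta_star d x w' \<in> F"
            unfolding C_def by blast
          hence "delta_star d (d q a) (w @ w') \<in> F" "set (w@w') \<subseteq> Sig" using q(2) wS by auto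
          hence "d q a \<in> C" using qa unfolding C_def by blast
          thus "x \<in> (\<lambda>q. delta_star d q w) ` ds S a \<inter> C" using q by (auto simp: ds_def)
        qed
      qed
      finally show ?case .
    qed
    have lang2: "lang Sig (R \<inter> C) ds (Pow C - {{}}) = fact (lang Sig q0 d F)"
    proof (rule set_eqI)
      fix w
      show "w \<in> lang Sig (R \<inter> C) ds (Pow C - {{}}) \<longleftrightarrow> w \<in> fact (lang Sig q0 d F)"
      proof
        assume "w \<in> lang Sig (R \<inter> C) ds (Pow C - {{}})"
        hence w: "set w \<subseteq> Sig" and ne: "delta_star ds (R \<inter> C) w \<noteq> {}"
          by (auto simp: lang_def)
        from ne key[of "R \<inter> C" w] w obtain q where q: "q \<in> R" "delta_star d q w \<in> C"
          by auto
        from q(1) obtain u where u: "set u \<subseteq> Sig" "q = delta_star d q0 u" unfolding R_def by blast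
        from q(2) obtain v where v: "set v \<subseteq> Sig" "delta_star d (delta_star d q w) v \<in> F"
          unfolding C_def by blast
        have "u @ w @ v \<in> lang Sig q0 d F" using u v w by (simp add: lang_def)
        thus "w \<in> fact (lang Sig q0 d F)" unfolding fact_def by blast
      next
        assume "w \<in> fact (lang Sig q0 d F)"
        then obtain u v where uwv: "u @ w @ v \<in> lang Sig q0 d F" unfolding fact_def by blast
        hence s: "set u \<subseteq> Sig" "set w \<subseteq> Sig" "set v \<subseteq> Sig"
          and f: "delta_star d (delta_star d (delta_star d q0 u) w) v \<in> F"
          by (auto simp: lang_def)
        define q where "q = delta_star d q0 u"
        have qQ: "q \<in> Q" using ds_closed[OF cl q0 s(1)] q_def by simp
        have qR: "q \<in> R" using s(1) q_def R_def by blast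
        have "set (w@v) \<subseteq> Sig" using s by simp
        moreover have "delta_star d q (w@v) \<in> F" using f unfolding q_def by simp
        ultimately have qC: "q \<in> C" using qQ unfolding C_def by blast
        have qwC: "delta_star d q w \<in> C"
          using ds_closed[OF cl qQ s(2)] f s(3) unfolding C_def q_def by blast
        have "delta_star ds (R \<inter> C) w \<noteq> {}"
          using key[of "R \<inter> C" w] s(2) qR qC qwC by blast
        moreover have "delta_star ds (R \<inter> C) w \<subseteq> C"
          using key[of "R \<inter> C" w] s(2) by auto
        ultimately show "w \<in> lang Sig (R \<inter> C) ds (Pow C - {{}})"
          using s(2) by (simp add: lang_def)
      qed
    qed
    obtain Q' :: "nat set" and q0' d' F' where
      M: "dfa Sig Q' q0' d' F'" "lang Sig q0' d' F' = lang Sig (R \<inter> C) ds (Pow C - {{}})"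
         "card Q' = card (Pow C)"
      using dfa_to_nat[OF dfa2] by blast
    have "card (Pow C) \<le> 2 ^ (card Q - 1)"
      using card_Pow[OF finC] cardC by (simp add: power_increasing)
    thus ?thesis using M lang2 by metis
  qed
qed


definition dw :: "nat \<Rightarrow> nat \<Rightarrow> nat \<Rightarrow> nat" where
  "dw m q a = (if q < m \<and> a < m then (if q = a then m else q)
      else if q < m \<and> m \<le> a \<and> a < 2*m then a - m else m)"

lemma dw_dead: "m \<le> q \<Longrightarrow> m \<le> delta_star (dw m) q v"
proof (induction v arbitrary: q)
  case Nil then show ?case by simp
next
  case (Cons a v)
  have "dw m q a = m" using Cons.prems by (simp add: dw_def)
  then show ?case using Cons.IH[of m] by simp
qed

lemma dw_dead_eq: "delta_star (dw m) m v = m"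
  by (induction v) (auto simp: dw_def)

lemma dw_kill: "set v \<subseteq> {..<m} \<Longrightarrow> q < m \<Longrightarrow>
   delta_star (dw m) q v = (if q \<in> set v then m else q)"
proof (induction v arbitrary: q)
  case Nil then show ?case by simp
next
  case (Cons a v)
  then have a: "a < m" by auto
  show ?case
  proof (cases "q = a")
    case True
    then have "dw m q a = m" using a by (simp add: dw_def)
    then show ?thesis using True by (simp add: dw_dead_eq)
  next
    case False
    then have "dw m q a = q" using a Cons.prems by (simp add: dw_def)
    then show ?thesis using Cons False by auto
  qed
qed

lemma dw_dfa: "dfa {..<2*m} {..m} 0 (dw m) {..<m}"
  by (auto simp: dfa_def dw_def)

lemma dw_fact: "v \<in> fact (lang {..<2*m} 0 (dw m) {..<m}) \<longleftrightarrow>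
   set v \<subseteq> {..<2*m} \<and> (\<exists>q<m. delta_star (dw m) q v < m)"
proof
  assume "v \<in> fact (lang {..<2*m} 0 (dw m) {..<m})"
  then obtain u w where "u @ v @ w \<in> lang {..<2*m} 0 (dw m) {..<m}"
    unfolding fact_def by blast
  hence s: "set v \<subseteq> {..<2*m}" and f: "delta_star (dw m) (delta_star (dw m) (delta_star (dw m) 0 u) v) w < m"
    by (auto simp: lang_def)
  define q where "q = delta_star (dw m) 0 u"
  have 1: "delta_star (dw m) q v < m" using f dw_dead unfolding q_def by (meson not_le)
  have "q < m" using 1 dw_dead by (meson not_le)
  thus "set v \<subseteq> {..<2*m} \<and> (\<exists>q<m. delta_star (dw m) q v < m)" using s 1 by blast
next
  assume "set v \<subseteq> {..<2*m} \<and> (\<exists>q<m. delta_star (dw m) q v < m)"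
  then obtain q where s: "set v \<subseteq> {..<2*m}" and q: "q < m" "delta_star (dw m) q v < m" by blast
  have "dw m 0 (m+q) = q" using q(1) by (simp add: dw_def)
  hence "[m+q] @ v @ [] \<in> lang {..<2*m} 0 (dw m) {..<m}"
    using s q by (simp add: lang_def)
  thus "v \<in> fact (lang {..<2*m} 0 (dw m) {..<m})" unfolding fact_def by blast
qed

definition us :: "nat \<Rightarrow> nat set \<Rightarrow> nat list" where
  "us m S = filter (\<lambda>j. j \<notin> S) [0..<m]"
definition xs :: "nat \<Rightarrow> nat \<Rightarrow> nat list" where
  "xs m i = filter (\<lambda>j. j \<noteq> i) [0..<m]"

lemma us_xs_fact:
  assumes "i < m"
  shows "us m S @ xs m i \<in> fact (lang {..<2*m} 0 (dw m) {..<m}) \<longleftrightarrow> i \<in> S"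
proof -
  have st: "set (us m S @ xs m i) \<subseteq> {..<m}" by (auto simp: us_def xs_def)
  have "(\<exists>q<m. delta_star (dw m) q (us m S @ xs m i) < m) \<longleftrightarrow> i \<in> S"
  proof -
    have "delta_star (dw m) q (us m S @ xs m i) < m \<longleftrightarrow> q \<in> S \<and> q = i" if "q < m" for q
      using dw_kill[OF st that] that by (auto simp: us_def xs_def)
    thus ?thesis using assms by blast
  qed
  moreover have "set (us m S @ xs m i) \<subseteq> {..<2*m}" using st by auto
  ultimately show ?thesis using dw_fact by blast
qed

lemma lower:
  assumes "dfa Sig' (Q'::nat set) q0' d' F'" "Sig' = {..<2*m}"
    "lang Sig' q0' d' F' = fact (lang {..<2*m} 0 (dw m) {..<m})"
  shows "2 ^ m \<le> card Q'"
proof -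
  from assms(1) have fin: "finite Q'" and cl: "\<forall>q\<in>Q'. \<forall>a\<in>Sig'. d' q a \<in> Q'"
    and q0: "q0' \<in> Q'" by (auto simp: dfa_def)
  define h where "h S = delta_star d' q0' (us m S)" for S
  have sub: "set (us m S) \<subseteq> Sig'" "set (xs m i) \<subseteq> Sig'" for S i
    using assms(2) by (auto simp: us_def xs_def)
  have mem: "i \<in> S \<longleftrightarrow> delta_star d' (h S) (xs m i) \<in> F'" if "i < m" for S i
  proof -
    have "i \<in> S \<longleftrightarrow> us m S @ xs m i \<in> lang Sig' q0' d' F'"
      using us_xs_fact[OF that] assms(3) by simp
    also have "\<dots> \<longleftrightarrow> delta_star d' (h S) (xs m i) \<in> F'"
      using sub by (simp add: lang_def h_def)
    finally show ?thesis .
  qed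
  have "inj_on h (Pow {..<m})"
  proof (rule inj_onI)
    fix S T assume S: "S \<in> Pow {..<m}" and T: "T \<in> Pow {..<m}" and e: "h S = h T"
    show "S = T"
    proof (rule set_eqI)
      fix i show "i \<in> S \<longleftrightarrow> i \<in> T"
      proof (cases "i < m")
        case True then show ?thesis using mem[OF True, of S] mem[OF True, of T] e by simp
      next
        case False then show ?thesis using S T by auto
      qed
    qed
  qed
  moreover have "h ` Pow {..<m} \<subseteq> Q'"
    using ds_closed[OF cl q0 sub(1)] by (auto simp: h_def)
  ultimately have "card (Pow {..<m}) \<le> card Q'" using card_inj_on_le fin by blast
  thus ?thesis by (simp add: card_Pow)
qed

theorem mainTheorem14:
  shows "(\<forall>(Sig::'a set) (Q::'s set) q0 delta F. dfa Sig Q q0 delta F \<longrightarrow>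
            (\<exists>(Q'::nat set) q0' delta' F'. dfa Sig Q' q0' delta' F' \<and>
               lang Sig q0' delta' F' = fact (lang Sig q0 delta F) \<and>
               card Q' \<le> 2 ^ (card Q - 1)))
       \<and> (\<forall>n::nat. n \<ge> 1 \<longrightarrow>
            (\<exists>(Sig::nat set) (Q::nat set) q0 delta F. dfa Sig Q q0 delta F \<and> card Q = n \<and>
               min_dfa_states Sig (fact (lang Sig q0 delta F)) = 2 ^ (n - 1)))"
proof (intro conjI allI impI)
  fix Sig :: "'a set" and Q :: "'s set" and q0 delta F
  assume "dfa Sig Q q0 delta F"
  thus "\<exists>(Q'::nat set) q0' delta' F'. dfa Sig Q' q0' delta' F' \<and>
               lang Sig q0' delta' F' = fact (lang Sig q0 delta F) \<and>
               card Q' \<le> 2 ^ (card Q - 1)" by (rule upper)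
next
  fix n :: nat assume n: "n \<ge> 1"
  define m where "m = n - 1"
  have cQ: "card {..m} = n" using n m_def by simp
  have mn: "min_dfa_states {..<2*m} (fact (lang {..<2*m} 0 (dw m) {..<m})) = 2 ^ m"
    unfolding min_dfa_states_def
  proof (rule Least_equality)
    obtain Q' :: "nat set" and q0' d' F' where M: "dfa {..<2*m} Q' q0' d' F'"
      "lang {..<2*m} q0' d' F' = fact (lang {..<2*m} 0 (dw m) {..<m})"
      "card Q' \<le> 2 ^ (card {..m} - 1)"
      using upper[OF dw_dfa[of m]] by blast
    have "2 ^ m \<le> card Q'" using lower[OF M(1) refl M(2)] .
    moreover have "card Q' \<le> 2 ^ m" using M(3) by simp
    ultimately have "card Q' = 2 ^ m" by simp
    thus "\<exists>(Q::nat set) q0 delta F. dfa {..<2*m} Q q0 delta F \<and>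
        lang {..<2*m} q0 delta F = fact (lang {..<2*m} 0 (dw m) {..<m}) \<and> card Q = 2 ^ m"
      using M by blast
  next
    fix y assume "\<exists>(Q::nat set) q0 delta F. dfa {..<2*m} Q q0 delta F \<and>
        lang {..<2*m} q0 delta F = fact (lang {..<2*m} 0 (dw m) {..<m}) \<and> card Q = y"
    then obtain Q :: "nat set" and q0 delta F where "dfa {..<2*m} Q q0 delta F"
      "lang {..<2*m} q0 delta F = fact (lang {..<2*m} 0 (dw m) {..<m})" "card Q = y" by blast
    thus "2 ^ m \<le> y" using lower by blast
  qed
  show "\<exists>(Sig::nat set) (Q::nat set) q0 delta F. dfa Sig Q q0 delta F \<and> card Q = n \<and>
               min_dfa_states Sig (fact (lang Sig q0 delta F)) = 2 ^ (n - 1)"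
    apply (rule exI[of _ "{..<2*m}"], rule exI[of _ "{..m}"], rule exI[of _ 0],
        rule exI[of _ "dw m"], rule exI[of _ "{..<m}"])
    using mn dw_dfa[of m] cQ by (simp add: m_def[symmetric])
qed

end
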